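(* Let $P\in\mathbb{R}^{p\times m}$, $Y_d\in\mathbb{R}^p$, plant $Y_k=PU_k+N_k$, $E_k=Y_d-Y_k$, $\bar U_k=-\Delta U_k$, $D_k=-\Delta N_k$ (so $E_{k+1}=E_k+P\bar U_k+D_k$), $\bar B=\begin{bmatrix}P\\0\end{bmatrix}$, $\bar L\in\mathbb{R}^{2p\times p}$, and consider the ESO $\hat{\bar X}_{k+1}=(\bar A-\bar L\bar C)\hat{\bar X}_k+\bar B\bar U_k+\bar LE_k$ with $\hat{\bar X}_k=\begin{bmatrix}\hat E_k\\\hat D_k\end{bmatrix}$, $\hat E_k,\hat D_k\in\mathbb{R}^p$. Let $K,H\in\mathbb{R}^{m\times p}$, $\bar K=\begin{bmatrix}K&H\end{bmatrix}$, and apply $\bar U_k=-\bar K\hat{\bar X}_k=-K\hat E_k-H\hat D_k$. Then $\begin{bmatrix}E_{k+1}\\\hat{\bar X}_{k+1}\end{bmatrix}=G\begin{bmatrix}E_{k}\\\hat{\bar X}_{k}\end{bmatrix}+\begin{bmatrix}I\\0\end{bmatrix}D_k$ with $G=\begin{bmatrix}I&-P\bar K\\\bar L&\bar A-\bar L\bar C-\bar B\bar K\end{bmatrix}$, and with the nonsingular $T=\begin{bmatrix}I&0\\-\bar C^{\top}&I\end{bmatrix}$ one has $TGT^{-1}=\begin{bmatrix}I-PK&-P\bar K\\0&\bar A-\bar L\bar C\end{bmatrix}$. Consequently the eigenvalues of $G$ are those of $I-PK$ together with those of $\bar A-\bar L\bar C$ (separation principle), so the feedback gain $K$ and the observer gain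 $\bar L$ can be designed separately, $K$ in the same way as for the pure state feedback $\bar U_k=-KE_k$.
   Context: $\mathbb{Z}_+=\{0,1,2,\dots\}$; $\Delta f_k=f_{k+1}-f_k$. $U_k\in\mathbb{R}^m$ input, $Y_k\in\mathbb{R}^p$ output, $(N_k)\subset\mathbb{R}^p$ a bounded uncertainty sequence. $\bar A=\begin{bmatrix}I_p&I_p\\0&I_p\end{bmatrix}$, $\bar C=\begin{bmatrix}I_p&0\end{bmatrix}$. *)

theory Defs
  imports "Jordan_Normal_Form.Matrix" "Jordan_Normal_Form.Char_Poly"
begin

definition Abar :: "nat \<Rightarrow> real mat" where
  "Abar p = four_block_mat (1\<^sub>m p) (1\<^sub>m p) (0\<^sub>m p p) (1\<^sub>m p)"

definition Cbar :: "nat \<Rightarrow> real mat" where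
  "Cbar p = four_block_mat (1\<^sub>m p) (0\<^sub>m p p) (0\<^sub>m 0 p) (0\<^sub>m 0 p)"

definition Bbar :: "real mat \<Rightarrow> real mat" where
  "Bbar P = P @\<^sub>r 0\<^sub>m (dim_row P) (dim_col P)"

definition Kbar :: "real mat \<Rightarrow> real mat \<Rightarrow> real mat" where
  "Kbar K H = four_block_mat K H (0\<^sub>m 0 (dim_col K)) (0\<^sub>m 0 (dim_col H))"

definition Gmat :: "nat \<Rightarrow> real mat \<Rightarrow> real mat \<Rightarrow> real mat \<Rightarrow> real mat \<Rightarrow> real mat" where
  "Gmat p P K H L = four_block_mat (1\<^sub>m p) (- (P * Kbar K H))
      L (Abar p - L * Cbar p - Bbar P * Kbar K H)"

definition Tmat :: "nat \<Rightarrow> real mat" where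
  "Tmat p = four_block_mat (1\<^sub>m p) (0\<^sub>m p (2*p)) (- transpose_mat (Cbar p)) (1\<^sub>m (2*p))"

end

theory Submission
  imports Defs
begin

lemma Cbar_dims[simp]: "dim_row (Cbar p) = p" "dim_col (Cbar p) = 2*p"
  unfolding Cbar_def by auto
lemma Cbar_carrier[simp]: "Cbar p \<in> carrier_mat p (2*p)"
  unfolding carrier_mat_def by simp
lemma Cbar_idx[simp]: "i < p \<Longrightarrow> j < 2*p \<Longrightarrow> Cbar p $$ (i,j) = (if i = j then 1 else 0)"
  unfolding Cbar_def by auto
lemma Abar_dims[simp]: "dim_row (Abar p) = 2*p" "dim_col (Abar p) = 2*p"
  unfolding Abar_def by auto
lemma Abar_carrier[simp]: "Abar p \<in> carrier_mat (2*p) (2*p)"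
  unfolding carrier_mat_def by simp
lemma Abar_idx[simp]: "i < 2*p \<Longrightarrow> j < 2*p \<Longrightarrow> Abar p $$ (i,j) = (if i = j \<or> j = i + p then 1 else 0)"
  unfolding Abar_def by auto
lemma Kbar_dims[simp]: "dim_row (Kbar K H) = dim_row K" "dim_col (Kbar K H) = dim_col K + dim_col H"
  unfolding Kbar_def by auto
lemma Kbar_idx[simp]: "i < dim_row K \<Longrightarrow> j < dim_col K + dim_col H \<Longrightarrow>
  Kbar K H $$ (i,j) = (if j < dim_col K then K $$ (i,j) else H $$ (i, j - dim_col K))"
  unfolding Kbar_def by auto
lemma Bbar_dims[simp]: "dim_row (Bbar P) = 2 * dim_row P" "dim_col (Bbar P) = dim_col P"
  unfolding Bbar_def append_rows_def by auto
lemma Bbar_idx[simp]: "i < 2 * dim_row P \<Longrightarrow> j < dim_col P \<Longrightarrow>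
  Bbar P $$ (i,j) = (if i < dim_row P then P $$ (i,j) else 0)"
  unfolding Bbar_def append_rows_def by auto

lemma LC_idx: assumes "L \<in> carrier_mat n p" "i < n" "j < 2*p"
  shows "(L * Cbar p) $$ (i,j) = (if j < p then L $$ (i,j) else 0)"
proof -
  have "(L * Cbar p) $$ (i,j) = (\<Sum>l\<in>{0..<p}. L $$ (i,l) * (if l = j then 1 else 0))"
    using assms by (simp add: scalar_prod_def)
  also have "\<dots> = (\<Sum>l\<in>{0..<p}. (if l = j then L $$ (i,l) else 0))"
    by (rule sum.cong) auto
  finally show ?thesis by simp
qed

lemma PK_idx: assumes P: "P \<in> carrier_mat p m" and K: "K \<in> carrier_mat m p" and H: "H \<in> carrier_mat m p"
  and i: "i < p" and j: "j < 2*p"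
  shows "(P * Kbar K H) $$ (i,j) = (if j < p then (P * K) $$ (i,j) else (P * H) $$ (i, j - p))"
proof -
  have dK: "dim_row K = m" "dim_col K = p" "dim_row H = m" "dim_col H = p" "dim_row P = p" "dim_col P = m"
    using K H P by auto
  have e: "(P * Kbar K H) $$ (i,j) = (\<Sum>l\<in>{0..<m}. P $$ (i,l) * Kbar K H $$ (l,j))"
    using i j by (simp add: dK scalar_prod_def)
  show ?thesis
  proof (cases "j < p")
    case True
    have "(P * K) $$ (i,j) = (\<Sum>l\<in>{0..<m}. P $$ (i,l) * K $$ (l,j))"
      using i True by (simp add: dK scalar_prod_def)
    then show ?thesis using e True j by (simp add: dK)
  next
    case False
    have "(P * H) $$ (i,j-p) = (\<Sum>l\<in>{0..<m}. P $$ (i,l) * H $$ (l,j-p))"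
      using i False j by (simp add: dK scalar_prod_def)
    then show ?thesis using e False j by (simp add: dK)
  qed
qed

lemma BK_idx: assumes P: "P \<in> carrier_mat p m" and K: "K \<in> carrier_mat m p" and H: "H \<in> carrier_mat m p"
  and i: "i < 2*p" and j: "j < 2*p"
  shows "(Bbar P * Kbar K H) $$ (i,j) = (if i < p then (P * Kbar K H) $$ (i,j) else 0)"
proof -
  have dK: "dim_row K = m" "dim_col K = p" "dim_row H = m" "dim_col H = p" "dim_row P = p" "dim_col P = m"
    using K H P by auto
  have e: "(Bbar P * Kbar K H) $$ (i,j) = (\<Sum>l\<in>{0..<m}. Bbar P $$ (i,l) * Kbar K H $$ (l,j))"
    using i j by (simp add: dK scalar_prod_def)
  show ?thesis
  proof (cases "i < p")
    case True
    have "(P * Kbar K H) $$ (i,j) = (\<Sum>l\<in>{0..<m}. P $$ (i,l) * Kbar K H $$ (l,j))"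
      using True j by (simp add: dK scalar_prod_def)
    then show ?thesis using e True i by (simp add: dK)
  next
    case False
    then show ?thesis using e i by (simp add: dK)
  qed
qed

lemma Tmat_dims[simp]: "dim_row (Tmat p) = 3*p" "dim_col (Tmat p) = 3*p"
  unfolding Tmat_def by auto
lemma Tmat_carrier[simp]: "Tmat p \<in> carrier_mat (3*p) (3*p)"
  unfolding carrier_mat_def by simp
lemma Tmat_idx: "i < 3*p \<Longrightarrow> j < 3*p \<Longrightarrow> Tmat p $$ (i,j) =
  (if i = j then 1 else if p \<le> i \<and> i < 2*p \<and> j = i - p then -1 else 0)"
  unfolding Tmat_def by auto

definition Timat :: "nat \<Rightarrow> real mat" where
  "Timat p = four_block_mat (1\<^sub>m p) (0\<^sub>m p (2*p)) (transpose_mat (Cbar p)) (1\<^sub>m (2*p))"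

lemma Timat_dims[simp]: "dim_row (Timat p) = 3*p" "dim_col (Timat p) = 3*p"
  unfolding Timat_def by auto
lemma Timat_carrier[simp]: "Timat p \<in> carrier_mat (3*p) (3*p)"
  unfolding carrier_mat_def by simp
lemma Timat_idx: "i < 3*p \<Longrightarrow> j < 3*p \<Longrightarrow> Timat p $$ (i,j) =
  (if i = j then 1 else if p \<le> i \<and> i < 2*p \<and> j = i - p then 1 else 0)"
  unfolding Timat_def by auto

lemma TM_idx: assumes M: "M \<in> carrier_mat (3*p) n" and i: "i < 3*p" and j: "j < n"
  shows "(Tmat p * M) $$ (i,j) = M $$ (i,j) - (if p \<le> i \<and> i < 2*p then M $$ (i-p,j) else 0)"
proof -
  have "(Tmat p * M) $$ (i,j) = (\<Sum>l\<in>{0..<3*p}. Tmat p $$ (i,l) * M $$ (l,j))"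
    using M i j by (simp add: scalar_prod_def)
  also have "\<dots> = (\<Sum>l\<in>{0..<3*p}. (if l = i then M $$ (l,j) else 0)
      - (if l = i - p \<and> p \<le> i \<and> i < 2*p then M $$ (l,j) else 0))"
    using i by (intro sum.cong) (auto simp: Tmat_idx)
  also have "\<dots> = M $$ (i,j) - (if p \<le> i \<and> i < 2*p then M $$ (i-p,j) else 0)"
    using i by (cases "p \<le> i \<and> i < 2*p") (auto simp: sum_subtractf)
  finally show ?thesis .
qed

lemma TiM_idx: assumes M: "M \<in> carrier_mat (3*p) n" and i: "i < 3*p" and j: "j < n"
  shows "(Timat p * M) $$ (i,j) = M $$ (i,j) + (if p \<le> i \<and> i < 2*p then M $$ (i-p,j) else 0)"
proof -
  have "(Timat p * M) $$ (i,j) = (\<Sum>l\<in>{0..<3*p}. Timat p $$ (i,l) * M $$ (l,j))"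
    using M i j by (simp add: scalar_prod_def)
  also have "\<dots> = (\<Sum>l\<in>{0..<3*p}. (if l = i then M $$ (l,j) else 0)
      + (if l = i - p \<and> p \<le> i \<and> i < 2*p then M $$ (l,j) else 0))"
    using i by (intro sum.cong) (auto simp: Timat_idx)
  also have "\<dots> = M $$ (i,j) + (if p \<le> i \<and> i < 2*p then M $$ (i-p,j) else 0)"
    using i by (cases "p \<le> i \<and> i < 2*p") (auto simp: sum.distrib)
  finally show ?thesis .
qed

lemma MTi_idx: assumes M: "M \<in> carrier_mat n (3*p)" and i: "i < n" and j: "j < 3*p"
  shows "(M * Timat p) $$ (i,j) = M $$ (i,j) + (if j < p then M $$ (i,j+p) else 0)"
proof -
  have "(M * Timat p) $$ (i,j) = (\<Sum>l\<in>{0..<3*p}. M $$ (i,l) * Timat p $$ (l,j))"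
    using M i j by (simp add: scalar_prod_def)
  also have "\<dots> = (\<Sum>l\<in>{0..<3*p}. (if l = j then M $$ (i,l) else 0)
      + (if l = j + p \<and> j < p then M $$ (i,l) else 0))"
    using j by (intro sum.cong) (auto simp: Timat_idx)
  also have "\<dots> = M $$ (i,j) + (if j < p then M $$ (i,j+p) else 0)"
    using j by (simp add: sum.distrib)
  finally show ?thesis .
qed

lemma TTi: "Tmat p * Timat p = 1\<^sub>m (3*p)"
proof (rule eq_matI)
  fix i j assume "i < dim_row (1\<^sub>m (3*p))" "j < dim_col (1\<^sub>m (3*p))"
  then show "(Tmat p * Timat p) $$ (i,j) = 1\<^sub>m (3*p) $$ (i,j)"
    by (subst TM_idx[of _ p "3*p"]) (auto simp: Timat_idx)
qed auto
lemma TiT: "Timat p * Tmat p = 1\<^sub>m (3*p)"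
proof (rule eq_matI)
  fix i j assume "i < dim_row (1\<^sub>m (3*p))" "j < dim_col (1\<^sub>m (3*p))"
  then show "(Timat p * Tmat p) $$ (i,j) = 1\<^sub>m (3*p) $$ (i,j)"
    by (subst TiM_idx[of _ p "3*p"]) (auto simp: Tmat_idx)
qed auto


lemma assoc4: assumes "A \<in> carrier_mat n n" "B \<in> carrier_mat n n" "C \<in> carrier_mat n n" "D \<in> carrier_mat n n"
  shows "A * (B * C * A) * B = (A * B) * C * (A * B)"
proof -
  note c = assms
  have ca: "C * A \<in> carrier_mat n n" "A * B \<in> carrier_mat n n" using c by auto
  have "A * (B * C * A) * B = A * (B * (C * A)) * B" using c by (simp add: assoc_mult_mat[of B n n C n A n])
  also have "\<dots> = (A * B) * (C * A) * B" using c ca by (simp add: assoc_mult_mat[of A n n B n "C * A" n])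
  also have "\<dots> = (A * B) * ((C * A) * B)" using c ca by (simp add: assoc_mult_mat[of "A * B" n n "C * A" n B n])
  also have "\<dots> = (A * B) * (C * (A * B))" using c ca by (simp add: assoc_mult_mat[of C n n A n B n])
  also have "\<dots> = (A * B) * C * (A * B)" by (rule assoc_mult_mat[symmetric]) (use c ca in auto)
  finally show ?thesis .
qed

definition Xmat :: "nat \<Rightarrow> real mat \<Rightarrow> real mat \<Rightarrow> real mat \<Rightarrow> real mat \<Rightarrow> real mat" where
  "Xmat p P K H L = four_block_mat (1\<^sub>m p - P * K) (- (P * Kbar K H)) (0\<^sub>m (2*p) p) (Abar p - L * Cbar p)"

context
  fixes p m :: nat and P K H L :: "real mat"
  assumes P: "P \<in> carrier_mat p m"
    and K: "K \<in> carrier_mat m p" and H: "H \<in> carrier_mat m p"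
    and L: "L \<in> carrier_mat (2*p) p"
begin

lemma G_carrier: "Gmat p P K H L \<in> carrier_mat (3*p) (3*p)"
  using P K H L unfolding Gmat_def carrier_mat_def by auto

lemma G_idx: assumes i: "i < 3*p" and j: "j < 3*p"
  shows "Gmat p P K H L $$ (i,j) =
   (if i < p then (if j < p then (if i = j then 1 else 0)
                   else if j < 2*p then - (P*K) $$ (i, j-p) else - (P*H) $$ (i, j-2*p))
    else if j < p then L $$ (i-p, j)
    else (if i - p = j - p \<or> j - p = i - p + p then 1 else 0)
         - (if j < 2*p then L $$ (i-p, j-p) else 0)
         - (if i < 2*p then (if j < 2*p then (P*K) $$ (i-p, j-p) else (P*H) $$ (i-p, j-2*p)) else 0))"
proof -
  have d: "dim_row P = p" "dim_col P = m" "dim_row K = m" "dim_col K = p" "dim_row H = m" "dim_col H = p"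
    "dim_row L = 2*p" "dim_col L = p" using P K H L by auto
  show ?thesis
    unfolding Gmat_def using i j
    by (auto simp del: index_mult_mat simp add: index_mult_mat(2,3) mult_2 d LC_idx[OF L] BK_idx[OF P K H] PK_idx[OF P K H])
qed



lemma X_idx: assumes i: "i < 3*p" and j: "j < 3*p"
  shows "(Xmat p P K H L) $$ (i,j) =
   (if i < p then (if j < p then (if i = j then 1 else 0) - (P*K) $$ (i,j)
                   else if j < 2*p then - (P*K) $$ (i, j-p) else - (P*H) $$ (i, j-2*p))
    else if j < p then 0
    else (if i - p = j - p \<or> j - p = i - p + p then 1 else 0)
         - (if j < 2*p then L $$ (i-p, j-p) else 0))"
proof -
  have d: "dim_row P = p" "dim_col P = m" "dim_row K = m" "dim_col K = p" "dim_row H = m" "dim_col H = p"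
    "dim_row L = 2*p" "dim_col L = p" using P K H L by auto
  show ?thesis
    unfolding Xmat_def using i j
    by (auto simp del: index_mult_mat simp add: index_mult_mat(2,3) mult_2 d LC_idx[OF L] PK_idx[OF P K H])
qed

lemma TGTi: "Tmat p * Gmat p P K H L * Timat p = (Xmat p P K H L)"
proof (rule eq_matI)
  have d: "dim_row P = p" "dim_col P = m" "dim_row K = m" "dim_col K = p" "dim_row H = m" "dim_col H = p"
    "dim_row L = 2*p" "dim_col L = p" using P K H L by auto
  have dX: "dim_row (Xmat p P K H L) = 3*p" "dim_col (Xmat p P K H L) = 3*p" unfolding Xmat_def by (auto simp: d)
  then show "dim_row (Tmat p * Gmat p P K H L * Timat p) = dim_row (Xmat p P K H L)"
    "dim_col (Tmat p * Gmat p P K H L * Timat p) = dim_col (Xmat p P K H L)" by auto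
  fix i j assume "i < dim_row (Xmat p P K H L)" "j < dim_col (Xmat p P K H L)"
  then have i: "i < 3*p" and j: "j < 3*p" using dX by auto
  have TG: "Tmat p * Gmat p P K H L \<in> carrier_mat (3*p) (3*p)" using G_carrier by auto
  show "(Tmat p * Gmat p P K H L * Timat p) $$ (i,j) = (Xmat p P K H L) $$ (i,j)"
    apply (subst MTi_idx[OF TG i j])
    apply (subst TM_idx[OF G_carrier i j])
    apply (cases "j < p")
     apply (subst TM_idx[OF G_carrier i]; use j in simp)
    using i j
    apply (simp_all add: G_idx X_idx)
    apply (auto simp: G_idx X_idx)
    done
qed


lemma X_carrier: "(Xmat p P K H L) \<in> carrier_mat (3*p) (3*p)"
proof -
  have "(Xmat p P K H L) \<in> carrier_mat (p + 2*p) (p + 2*p)" unfolding Xmat_def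
    using P K L by (intro four_block_carrier_mat) auto
  then show ?thesis by simp
qed

lemma G_similar: "similar_mat (Gmat p P K H L) (Xmat p P K H L)"
  unfolding similar_mat_def
proof (intro exI)
  have "Timat p * (Xmat p P K H L) * Tmat p = Timat p * (Tmat p * Gmat p P K H L * Timat p) * Tmat p"
    by (simp add: TGTi)
  also have "\<dots> = (Timat p * Tmat p) * Gmat p P K H L * (Timat p * Tmat p)"
    using G_carrier by (intro assoc4) auto
  also have "\<dots> = Gmat p P K H L" using G_carrier by (simp add: TiT)
  finally show "similar_mat_wit (Gmat p P K H L) (Xmat p P K H L) (Timat p) (Tmat p)"
    unfolding similar_mat_wit_def Let_def using G_carrier X_carrier TTi TiT Timat_carrier Tmat_carrier
    by (simp add: carrier_matD)
qed

lemma X_char_poly: "char_poly (Xmat p P K H L) = char_poly (1\<^sub>m p - P * K) * char_poly (Abar p - L * Cbar p)"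
proof -
  have d: "dim_row P = p" "dim_col P = m" "dim_row K = m" "dim_col K = p" "dim_row H = m" "dim_col H = p"
    "dim_row L = 2*p" "dim_col L = p" using P K H L by auto
  have c1: "1\<^sub>m p - P * K \<in> carrier_mat p p" using P K by auto
  have c4: "Abar p - L * Cbar p \<in> carrier_mat (2*p) (2*p)" using L by auto
  have "Kbar K H \<in> carrier_mat (m+0) (p+p)" unfolding Kbar_def
    using K H by (intro four_block_carrier_mat) auto
  then have kb: "Kbar K H \<in> carrier_mat m (2*p)" by (simp add: mult_2)
  have c2: "- (P * Kbar K H) \<in> carrier_mat p (2*p)"
    using mult_carrier_mat[OF P kb] by simp
  have eq: "char_poly_matrix (Xmat p P K H L) = four_block_mat (char_poly_matrix (1\<^sub>m p - P * K))
      (map_mat (\<lambda>a. [:-a:]) (- (P * Kbar K H))) (0\<^sub>m (2*p) p) (char_poly_matrix (Abar p - L * Cbar p))"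
    unfolding Xmat_def char_poly_matrix_def using c1 c2 c4
    by (intro eq_matI) (auto simp: d)
  show ?thesis unfolding char_poly_def eq
    by (rule det_four_block_mat_lower_left_zero[of _ p _ "2*p"]) (use c1 c2 c4 in auto)
qed

end

theorem lemma4:
  fixes p m :: nat
    and P K H L :: "real mat"
    and Yd :: "real vec"
    and U Y N E Ub D :: "nat \<Rightarrow> real vec"
    and Xh :: "nat \<Rightarrow> real vec"
  assumes P: "P \<in> carrier_mat p m"
    and K: "K \<in> carrier_mat m p" and H: "H \<in> carrier_mat m p"
    and L: "L \<in> carrier_mat (2*p) p"
    and Yd: "Yd \<in> carrier_vec p"
    and U: "\<And>k. U k \<in> carrier_vec m"
    and N: "\<And>k. N k \<in> carrier_vec p"
    and Xh: "\<And>k. Xh k \<in> carrier_vec (2*p)"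
    and plant: "\<And>k. Y k = P *\<^sub>v U k + N k"
    and err: "\<And>k. E k = Yd - Y k"
    and Ubar: "\<And>k. Ub k = - (U (Suc k) - U k)"
    and Dist: "\<And>k. D k = - (N (Suc k) - N k)"
    and eso: "\<And>k. Xh (Suc k) = (Abar p - L * Cbar p) *\<^sub>v Xh k + Bbar P *\<^sub>v Ub k + L *\<^sub>v E k"
    and ctrl: "\<And>k. Ub k = - (Kbar K H *\<^sub>v Xh k)"
  shows "(\<forall>k. E (Suc k) @\<^sub>v Xh (Suc k)
             = Gmat p P K H L *\<^sub>v (E k @\<^sub>v Xh k)
               + (1\<^sub>m p @\<^sub>r 0\<^sub>m (2*p) p) *\<^sub>v D k)
       \<and> invertible_mat (Tmat p)
       \<and> (\<exists>Ti. Tmat p * Ti = 1\<^sub>m (3*p) \<and> Ti * Tmat p = 1\<^sub>m (3*p)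
              \<and> Tmat p * Gmat p P K H L * Ti
                  = four_block_mat (1\<^sub>m p - P * K) (- (P * Kbar K H))
                      (0\<^sub>m (2*p) p) (Abar p - L * Cbar p))
       \<and> char_poly (Gmat p P K H L)
           = char_poly (1\<^sub>m p - P * K) * char_poly (Abar p - L * Cbar p)
       \<and> (\<forall>z::complex. eigenvalue (map_mat complex_of_real (Gmat p P K H L)) z
             \<longleftrightarrow> eigenvalue (map_mat complex_of_real (1\<^sub>m p - P * K)) z
                 \<or> eigenvalue (map_mat complex_of_real (Abar p - L * Cbar p)) z)"
proof -
  have d: "dim_row P = p" "dim_col P = m" "dim_row K = m" "dim_col K = p" "dim_row H = m" "dim_col H = p"
    "dim_row L = 2*p" "dim_col L = p" using P K H L by auto
  have "Kbar K H \<in> carrier_mat (m+0) (p+p)" unfolding Kbar_def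
    using K H by (intro four_block_carrier_mat) auto
  then have kb: "Kbar K H \<in> carrier_mat m (2*p)" by (simp add: mult_2)
  have bb: "Bbar P \<in> carrier_mat (2*p) m" using P unfolding carrier_mat_def by simp
  have pkb: "P * Kbar K H \<in> carrier_mat p (2*p)" using P kb by simp
  have lc: "L * Cbar p \<in> carrier_mat (2*p) (2*p)" using L by simp
  have alc: "Abar p - L * Cbar p \<in> carrier_mat (2*p) (2*p)" using lc by (intro minus_carrier_mat) simp_all
  have bk: "Bbar P * Kbar K H \<in> carrier_mat (2*p) (2*p)" using bb kb by simp
  have M: "Abar p - L * Cbar p - Bbar P * Kbar K H \<in> carrier_mat (2*p) (2*p)" using alc bk by (intro minus_carrier_mat)
  have dyn: "E (Suc k) @\<^sub>v Xh (Suc k)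
             = Gmat p P K H L *\<^sub>v (E k @\<^sub>v Xh k)
               + (1\<^sub>m p @\<^sub>r 0\<^sub>m (2*p) p) *\<^sub>v D k" for k
  proof -
    define w where "w = Kbar K H *\<^sub>v Xh k"
    have w: "w \<in> carrier_vec m" unfolding w_def using kb Xh by simp
    have Ek: "E k \<in> carrier_vec p" using err plant Yd P U N by simp
    have Ek': "E (Suc k) \<in> carrier_vec p" using err plant Yd P U N by simp
    have Dk: "D k \<in> carrier_vec p" using Dist N by simp
    have vd: "dim_vec Yd = p" "dim_vec (N k) = p" "dim_vec (N (Suc k)) = p" "dim_vec (P *\<^sub>v U k) = p"
      "dim_vec (P *\<^sub>v w) = p" using Yd N[of k] N[of "Suc k"] P by auto
    have Uk: "U (Suc k) = U k + w"
    proof (rule eq_vecI)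
      fix i assume "i < dim_vec (U k + w)"
      then have i: "i < m" using U w by simp
      have "- (U (Suc k) - U k) = - w" using Ubar[of k] ctrl[of k] unfolding w_def by simp
      then have "(- (U (Suc k) - U k)) $ i = (- w) $ i" by simp
      moreover have "dim_vec (U k) = m" "dim_vec (U (Suc k)) = m" "dim_vec w = m" using U w by auto
      ultimately show "U (Suc k) $ i = (U k + w) $ i" using i by simp
    qed (use U w in simp)
    have f1: "P *\<^sub>v U (Suc k) = P *\<^sub>v U k + P *\<^sub>v w"
      unfolding Uk using P U w by (simp add: mult_add_distrib_mat_vec)
    have f2: "(- (P * Kbar K H)) *\<^sub>v Xh k = - (P *\<^sub>v w)"
    proof -
      have "(- (P * Kbar K H)) *\<^sub>v Xh k = - ((P * Kbar K H) *\<^sub>v Xh k)"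
        by (rule uminus_mult_mat_vec) (use Xh[of k] in \<open>simp add: d mult_2\<close>)
      also have "(P * Kbar K H) *\<^sub>v Xh k = P *\<^sub>v w"
        unfolding w_def by (rule assoc_mult_mat_vec[OF P kb Xh])
      finally show ?thesis .
    qed
    have f3: "(Bbar P * Kbar K H) *\<^sub>v Xh k = Bbar P *\<^sub>v w"
      unfolding w_def using bb kb Xh by simp
    have f4: "Bbar P *\<^sub>v Ub k = - (Bbar P *\<^sub>v w)"
      unfolding ctrl w_def using bb kb Xh by (intro eq_vecI) (auto simp: d scalar_prod_uminus_right)
    have f5: "(Abar p - L * Cbar p - Bbar P * Kbar K H) *\<^sub>v Xh k
        = (Abar p - L * Cbar p) *\<^sub>v Xh k - (Bbar P * Kbar K H) *\<^sub>v Xh k"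
      using alc bk Xh by (simp add: minus_mult_distrib_mat_vec)
    have g1: "Gmat p P K H L *\<^sub>v (E k @\<^sub>v Xh k) =
      (1\<^sub>m p *\<^sub>v E k + (- (P * Kbar K H)) *\<^sub>v Xh k) @\<^sub>v
      (L *\<^sub>v E k + (Abar p - L * Cbar p - Bbar P * Kbar K H) *\<^sub>v Xh k)"
      unfolding Gmat_def
      by (rule four_block_mat_mult_vec) (use L Ek Xh pkb M in auto)
    have z: "0\<^sub>m (2*p) p *\<^sub>v D k \<in> carrier_vec (2*p)"
      by (rule mult_mat_vec_carrier[OF zero_carrier_mat Dk])
    have g2: "(1\<^sub>m p @\<^sub>r 0\<^sub>m (2*p) p) *\<^sub>v D k = (1\<^sub>m p *\<^sub>v D k) @\<^sub>v (0\<^sub>m (2*p) p *\<^sub>v D k)"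
      by (rule mat_mult_append) (use Dk in auto)
    have "Gmat p P K H L *\<^sub>v (E k @\<^sub>v Xh k) + (1\<^sub>m p @\<^sub>r 0\<^sub>m (2*p) p) *\<^sub>v D k
       = (1\<^sub>m p *\<^sub>v E k + (- (P * Kbar K H)) *\<^sub>v Xh k + 1\<^sub>m p *\<^sub>v D k) @\<^sub>v
         (L *\<^sub>v E k + (Abar p - L * Cbar p - Bbar P * Kbar K H) *\<^sub>v Xh k + 0\<^sub>m (2*p) p *\<^sub>v D k)"
      unfolding g1 g2 by (rule append_vec_add[where n=p and m="2*p"]) (use L Ek Xh pkb M Dk z in auto)
    also have "\<dots> = E (Suc k) @\<^sub>v Xh (Suc k)"
    proof -
      have top: "1\<^sub>m p *\<^sub>v E k + (- (P * Kbar K H)) *\<^sub>v Xh k + 1\<^sub>m p *\<^sub>v D k = E (Suc k)"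
      proof (rule eq_vecI)
        fix i assume "i < dim_vec (E (Suc k))"
        then have i: "i < p" using Ek' by simp
        show "(1\<^sub>m p *\<^sub>v E k + (- (P * Kbar K H)) *\<^sub>v Xh k + 1\<^sub>m p *\<^sub>v D k) $ i = E (Suc k) $ i"
          unfolding f2 using Ek Dk
          apply simp
          unfolding Dist err plant f1 using i vd by simp
      qed (use Ek Ek' in simp)
      have bot: "L *\<^sub>v E k + (Abar p - L * Cbar p - Bbar P * Kbar K H) *\<^sub>v Xh k + 0\<^sub>m (2*p) p *\<^sub>v D k
         = Xh (Suc k)"
      proof (rule eq_vecI)
        fix i assume "i < dim_vec (Xh (Suc k))"
        then have i: "i < 2*p" using Xh[of "Suc k"] by simp
        have vd2: "dim_vec (L *\<^sub>v E k) = 2*p" "dim_vec ((Abar p - L * Cbar p) *\<^sub>v Xh k) = 2*p"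
          "dim_vec (Bbar P *\<^sub>v w) = 2*p" "dim_vec (0\<^sub>m (2*p) p *\<^sub>v D k) = 2*p"
          "(0\<^sub>m (2*p) p *\<^sub>v D k) $ i = 0"
          using L alc bb i Dk by auto
        show "(L *\<^sub>v E k + (Abar p - L * Cbar p - Bbar P * Kbar K H) *\<^sub>v Xh k + 0\<^sub>m (2*p) p *\<^sub>v D k) $ i
          = Xh (Suc k) $ i"
          unfolding f5 f3 eso f4 using i vd2 by simp
      qed (use Xh[of "Suc k"] L in simp)
      show ?thesis using top bot by simp
    qed
    finally show ?thesis by simp
  qed
  have TG: "Tmat p * Gmat p P K H L * Timat p = Xmat p P K H L"
    by (rule TGTi[OF P K H L])
  have cpG: "char_poly (Gmat p P K H L) = char_poly (1\<^sub>m p - P * K) * char_poly (Abar p - L * Cbar p)"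
    using char_poly_similar[OF G_similar[OF P K H L]] X_char_poly[OF P K H L] by simp
  have GC: "Gmat p P K H L \<in> carrier_mat (3*p) (3*p)" by (rule G_carrier[OF P K H L])
  have c1: "1\<^sub>m p - P * K \<in> carrier_mat p p" using P K by auto
  have ev: "eigenvalue (map_mat complex_of_real (Gmat p P K H L)) z
             \<longleftrightarrow> eigenvalue (map_mat complex_of_real (1\<^sub>m p - P * K)) z
                 \<or> eigenvalue (map_mat complex_of_real (Abar p - L * Cbar p)) z" for z
  proof -
    interpret h: map_poly_comm_ring_hom "complex_of_real" ..
    have "eigenvalue (map_mat complex_of_real (Gmat p P K H L)) z \<longleftrightarrow>
      poly (char_poly (map_mat complex_of_real (Gmat p P K H L))) z = 0"
      by (rule eigenvalue_root_char_poly) (use GC in simp)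
    also have "char_poly (map_mat complex_of_real (Gmat p P K H L))
        = char_poly (map_mat complex_of_real (1\<^sub>m p - P * K)) *
          char_poly (map_mat complex_of_real (Abar p - L * Cbar p))"
      unfolding of_real_hom.char_poly_hom[OF GC] of_real_hom.char_poly_hom[OF c1]
        of_real_hom.char_poly_hom[OF alc] cpG
      by (rule h.hom_mult)
    also have "poly \<dots> z = 0 \<longleftrightarrow> poly (char_poly (map_mat complex_of_real (1\<^sub>m p - P * K))) z = 0
       \<or> poly (char_poly (map_mat complex_of_real (Abar p - L * Cbar p))) z = 0"
      by simp
    also have "\<dots> \<longleftrightarrow> eigenvalue (map_mat complex_of_real (1\<^sub>m p - P * K)) z
                 \<or> eigenvalue (map_mat complex_of_real (Abar p - L * Cbar p)) z"
      using eigenvalue_root_char_poly[of "map_mat complex_of_real (1\<^sub>m p - P * K)" p z]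
        eigenvalue_root_char_poly[of "map_mat complex_of_real (Abar p - L * Cbar p)" "2*p" z]
        c1 alc by simp
    finally show ?thesis .
  qed
  have inv: "invertible_mat (Tmat p)"
    unfolding invertible_mat_def inverts_mat_def square_mat.simps
    using TTi TiT by (intro conjI exI[of _ "Timat p"]) auto
  show ?thesis
  proof (intro conjI allI)
    show "\<exists>Ti. Tmat p * Ti = 1\<^sub>m (3*p) \<and> Ti * Tmat p = 1\<^sub>m (3*p)
              \<and> Tmat p * Gmat p P K H L * Ti
                  = four_block_mat (1\<^sub>m p - P * K) (- (P * Kbar K H))
                      (0\<^sub>m (2*p) p) (Abar p - L * Cbar p)"
    proof (rule exI[of _ "Timat p"], intro conjI TTi TiT)
      show "Tmat p * Gmat p P K H L * Timat p
                  = four_block_mat (1\<^sub>m p - P * K) (- (P * Kbar K H))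
                      (0\<^sub>m (2*p) p) (Abar p - L * Cbar p)"
        using TG by (simp only: Xmat_def)
    qed
  qed (fact dyn inv cpG ev)+
qed

end
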